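(* Let $F\langle X\rangle$ be an MN-algebra and let $A$ be a PI-algebra. If the completion $C\left(F\langle X\rangle/Id(A)\right)$ of the quotient normed algebra $F\langle X\rangle/Id(A)$ (with the quotient norm $\|f+Id(A)\|=\inf\{\|f+g\|: g\in Id(A)\}$) is nil, then $A$ is nilpotent.
   Context: All algebras are non-unitary associative over $F\in\{\mathbb{R},\mathbb{C}\}$. A normed algebra has a norm with $\|ab\|\le\|a\|\|b\|$; $C(B)$ denotes its completion. $F\langle X\rangle$ is the free non-unitary associative algebra over $F$ on $X=\{x_1,x_2,\dots\}$. For $f=f(x_1,\dots,x_n)$, $f^{(d_1,\dots,d_n)}$ denotes its multihomogeneous component of multidegree $(d_1,\dots,d_n)$ (the sum of terms whose monomials contain each $x_i$ exactly $d_i$ times). A norm on $F\langle X\rangle$ is multihomogeneous if $\|f^{(d_1,\dots,d_n)}\|\le\|f\|$ for all $f$ and all multidegrees; $F\langle X\rangle$ is an MN-algebra if it is a normed algebra for a multihomogeneous norm. $Id(A)$ is the set of polynomial identities of $A$ (polynomials $f$ with $f(a_1,\dots,a_m)=0$ for all $a_i\in A$); $A$ is PI if $Id(A)\ne\{0\}$. In this setting $Id(A)$ is a closed ideal so the quotient norm makes $F\langle X\rangle/Id(A)$ a normed algebra. Nil: every element nilpotent; nilpotent: all products of some fixed length $n$ vanish. *)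

theory Defs
  imports Complex_Main
begin

text \<open>An algebra A is a type of class ring (Isabelle's ring class is associative
  and non-unitary) together with a scalar multiplication.\<close>

definition is_algebra :: "('k::field \<Rightarrow> 'a::ring \<Rightarrow> 'a) \<Rightarrow> bool" where
  "is_algebra smul \<longleftrightarrow>
     (\<forall>c x y. smul c (x + y) = smul c x + smul c y) \<and>
     (\<forall>c d x. smul (c + d) x = smul c x + smul d x) \<and>
     (\<forall>c d x. smul (c * d) x = smul c (smul d x)) \<and>
     (\<forall>x. smul 1 x = x) \<and>
     (\<forall>c x y. smul c (x * y) = smul c x * y) \<and>
     (\<forall>c x y. smul c (x * y) = x * smul c y)"

text \<open>Product of a nonempty list (no unit available).\<close>
fun nprod :: "'a::semigroup_mult list \<Rightarrow> 'a" where
  "nprod [] = undefined"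
| "nprod [x] = x"
| "nprod (x # y # xs) = x * nprod (y # xs)"

text \<open>A polynomial is a finitely supported function from words (lists of variable
  indices) to coefficients, with zero coefficient on the empty word.\<close>

definition FX :: "(nat list \<Rightarrow> 'k::zero) set" where
  "FX = {f. finite {w. f w \<noteq> 0} \<and> f [] = 0}"

definition padd :: "(nat list \<Rightarrow> 'k::plus) \<Rightarrow> (nat list \<Rightarrow> 'k) \<Rightarrow> (nat list \<Rightarrow> 'k)" where
  "padd f g = (\<lambda>w. f w + g w)"

definition psub :: "(nat list \<Rightarrow> 'k::minus) \<Rightarrow> (nat list \<Rightarrow> 'k) \<Rightarrow> (nat list \<Rightarrow> 'k)" where
  "psub f g = (\<lambda>w. f w - g w)"

definition pscale :: "'k::times \<Rightarrow> (nat list \<Rightarrow> 'k) \<Rightarrow> (nat list \<Rightarrow> 'k)" where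
  "pscale c f = (\<lambda>w. c * f w)"

text \<open>Multiplication: concatenation of monomials, extended bilinearly.\<close>
definition pmul :: "(nat list \<Rightarrow> 'k::comm_semiring_0) \<Rightarrow> (nat list \<Rightarrow> 'k) \<Rightarrow> (nat list \<Rightarrow> 'k)" where
  "pmul f g = (\<lambda>w. \<Sum>i\<le>length w. f (take i w) * g (drop i w))"

text \<open>Positive powers: ppow f k = f^(k+1).\<close>
fun ppow :: "(nat list \<Rightarrow> 'k::comm_semiring_0) \<Rightarrow> nat \<Rightarrow> (nat list \<Rightarrow> 'k)" where
  "ppow f 0 = f"
| "ppow f (Suc k) = pmul f (ppow f k)"

text \<open>Multihomogeneous component of multidegree d (d i = degree in x_i).\<close>
definition mhcomp :: "(nat \<Rightarrow> nat) \<Rightarrow> (nat list \<Rightarrow> 'k::zero) \<Rightarrow> (nat list \<Rightarrow> 'k)" where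
  "mhcomp d f = (\<lambda>w. if (\<forall>i. count_list w i = d i) then f w else 0)"

text \<open>N is a multihomogeneous algebra norm on F<X> (F<X> is an MN-algebra).\<close>
definition MN_norm :: "((nat list \<Rightarrow> 'k::real_normed_field) \<Rightarrow> real) \<Rightarrow> bool" where
  "MN_norm N \<longleftrightarrow>
     (\<forall>f\<in>FX. N f \<ge> 0) \<and>
     (\<forall>f\<in>FX. N f = 0 \<longleftrightarrow> f = (\<lambda>_. 0)) \<and>
     (\<forall>f\<in>FX. \<forall>g\<in>FX. N (padd f g) \<le> N f + N g) \<and>
     (\<forall>f\<in>FX. \<forall>c. N (pscale c f) = norm c * N f) \<and>
     (\<forall>f\<in>FX. \<forall>g\<in>FX. N (pmul f g) \<le> N f * N g) \<and>
     (\<forall>f\<in>FX. \<forall>d. N (mhcomp d f) \<le> N f)"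

definition peval :: "('k::field \<Rightarrow> 'a::ring \<Rightarrow> 'a) \<Rightarrow> (nat \<Rightarrow> 'a) \<Rightarrow> (nat list \<Rightarrow> 'k) \<Rightarrow> 'a" where
  "peval smul \<phi> f = (\<Sum>w\<in>{w. f w \<noteq> 0}. smul (f w) (nprod (map \<phi> w)))"

definition Id_alg :: "('k::field \<Rightarrow> 'a::ring \<Rightarrow> 'a) \<Rightarrow> (nat list \<Rightarrow> 'k) set" where
  "Id_alg smul = {f\<in>FX. \<forall>\<phi>. peval smul \<phi> f = 0}"

definition is_PI :: "('k::field \<Rightarrow> 'a::ring \<Rightarrow> 'a) \<Rightarrow> bool" where
  "is_PI smul \<longleftrightarrow> Id_alg smul \<noteq> {\<lambda>_. 0}"

definition qnorm :: "((nat list \<Rightarrow> 'k::real_normed_field) \<Rightarrow> real) \<Rightarrow> (nat list \<Rightarrow> 'k) set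
                     \<Rightarrow> (nat list \<Rightarrow> 'k) \<Rightarrow> real" where
  "qnorm N I f = (INF g\<in>I. N (padd f g))"

text \<open>The completion C(B) of B = F<X>/I is realised (standard construction) as
  Cauchy sequences in B modulo null sequences; products are computed
  termwise. So C(B) is nil iff for every Cauchy sequence (a n) in B there is a
  k \<ge> 1 with a_n^k \<rightarrow> 0 in B. Elements of B are represented by polynomials.\<close>
definition completion_nil :: "((nat list \<Rightarrow> 'k::real_normed_field) \<Rightarrow> real) \<Rightarrow> (nat list \<Rightarrow> 'k) set \<Rightarrow> bool" where
  "completion_nil N I \<longleftrightarrow>
     (\<forall>a :: nat \<Rightarrow> (nat list \<Rightarrow> 'k).
        (\<forall>n. a n \<in> FX) \<and>
        (\<forall>e>0. \<exists>M. \<forall>m\<ge>M. \<forall>n\<ge>M. qnorm N I (psub (a m) (a n)) < e)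
        \<longrightarrow> (\<exists>k. (\<lambda>n. qnorm N I (ppow (a n) k)) \<longlonglongrightarrow> 0))"

definition nilpotent_alg :: "'a::ring itself \<Rightarrow> bool" where
  "nilpotent_alg _ \<longleftrightarrow> (\<exists>n>0. \<forall>xs::'a list. length xs = n \<longrightarrow> nprod xs = 0)"

end

theory Submission
  imports Defs
begin

definition isI :: "('k::field \<Rightarrow> 'a::ring \<Rightarrow> 'a) \<Rightarrow> 'a set \<Rightarrow> bool" where
  "isI smul I \<longleftrightarrow> 0 \<in> I \<and> (\<forall>x\<in>I. \<forall>y\<in>I. x + y \<in> I) \<and> (\<forall>x\<in>I. - x \<in> I)
     \<and> (\<forall>x\<in>I. \<forall>a. a * x \<in> I \<and> x * a \<in> I) \<and> (\<forall>x\<in>I. \<forall>c. smul c x \<in> I)"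

definition Lm :: "'a::ring \<Rightarrow> nat \<Rightarrow> 'a \<Rightarrow> 'a" where
  "Lm x i = ((*) x) ^^ i"
definition Rm :: "'a::ring \<Rightarrow> nat \<Rightarrow> 'a \<Rightarrow> 'a" where
  "Rm x i = (\<lambda>z. z * x) ^^ i"
definition pw :: "'a::ring \<Rightarrow> nat \<Rightarrow> 'a" where
  "pw x n = Lm x n x"

lemma Lm_0[simp]: "Lm x 0 w = w" by (simp add: Lm_def)
lemma Rm_0[simp]: "Rm x 0 w = w" by (simp add: Rm_def)
lemma Lm_Suc: "Lm x (Suc i) w = x * Lm x i w" by (simp add: Lm_def)
lemma Rm_Suc: "Rm x (Suc i) w = Rm x i w * x" by (simp add: Rm_def)
lemma Lm_mult: "Lm x i (a * b) = Lm x i a * b"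
  by (induction i) (simp_all add: Lm_Suc mult.assoc)
lemma Rm_mult: "Rm x i (a * b) = a * Rm x i b"
  by (induction i) (simp_all add: Rm_Suc mult.assoc)
lemma Lm_Suc': "Lm x (Suc i) w = Lm x i (x * w)"
  by (simp add: Lm_def funpow_Suc_right del: funpow.simps)
lemma Lm_Rm: "Lm x i (Rm y j w) = Rm y j (Lm x i w)"
  by (induction i) (simp_all add: Lm_Suc Rm_mult)
lemma Rm_mult_L: "Rm y j z * a = z * Lm y j a"
  by (induction j arbitrary: a) (simp_all add: Rm_Suc mult.assoc Lm_Suc' Lm_mult)
lemma Rm_Suc': "Rm x (Suc i) w = Rm x i (w * x)"
  by (simp add: Rm_def funpow_Suc_right del: funpow.simps)
lemma Rm_pw: "Rm x (Suc m) w = w * pw x m"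
  by (simp add: Rm_Suc Rm_mult_L pw_def)
lemma Lm_comm: "x * Lm x m x = Lm x m x * x"
proof (induction m)
  case (Suc m) then show ?case by (simp add: Lm_Suc) (metis mult.assoc)
qed simp
lemma Lm_pw: "Lm x (Suc m) w = pw x m * w"
  by (simp add: pw_def Lm_Suc' Lm_mult)
lemma Rm_add: "Rm y a (Rm y b w) = Rm y (a + b) w"
  by (simp add: Rm_def funpow_add)
lemma Lm_sum: "Lm x i (sum f A) = (\<Sum>a\<in>A. Lm x i (f a))"
  by (induction i) (simp_all add: Lm_Suc sum_distrib_left)
lemma Rm_sum: "Rm x i (sum f A) = (\<Sum>a\<in>A. Rm x i (f a))"
  by (induction i) (simp_all add: Rm_Suc sum_distrib_right)
lemma pw_Suc: "pw x (Suc k) = x * pw x k"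
  by (simp add: pw_def Lm_Suc)
lemma pw_Rm: "pw x k = Rm x k x"
proof (induction k)
  case (Suc k) then show ?case by (simp add: Rm_Suc pw_def Lm_Suc) (metis Lm_comm)
qed (simp add: pw_def)

definition gl :: "'a::ring \<Rightarrow> 'a \<Rightarrow> nat \<Rightarrow> 'a" where
  "gl x y k = (\<Sum>i\<le>k. Lm x i (Rm x (k - i) y))"

lemma gl_Suc: "gl x y (Suc k) = x * gl x y k + y * pw x k"
proof -
  have "gl x y (Suc k) = Lm x 0 (Rm x (Suc k) y) + (\<Sum>i\<le>k. Lm x (Suc i) (Rm x (Suc k - Suc i) y))"
    unfolding gl_def by (subst sum.atMost_Suc_shift) simp
  also have "\<dots> = y * pw x k + x * gl x y k"
    by (simp add: Rm_pw Lm_Suc gl_def sum_distrib_left)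
  finally show ?thesis by (simp add: add.commute)
qed

lemma nprod_append: "xs \<noteq> [] \<Longrightarrow> ys \<noteq> [] \<Longrightarrow> nprod (xs @ ys) = nprod xs * nprod ys"
proof (induction xs rule: nprod.induct)
  case (2 x)
  then show ?case by (cases ys) auto
next
  case (3 x y xs)
  then show ?case by (simp add: mult.assoc)
qed simp

locale alg =
  fixes smul :: "'k::field_char_0 \<Rightarrow> 'a::ring \<Rightarrow> 'a"
  assumes A: "is_algebra smul"
begin

lemma sadd_r: "smul c (x + y) = smul c x + smul c y" using A by (simp add: is_algebra_def)
lemma sadd_l: "smul (c + d) x = smul c x + smul d x" using A by (simp add: is_algebra_def)
lemma smult: "smul (c * d) x = smul c (smul d x)" using A by (simp add: is_algebra_def)
lemma sone[simp]: "smul 1 x = x" using A by (simp add: is_algebra_def)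
lemma smul_ml: "smul c (x * y) = smul c x * y" using A by (simp add: is_algebra_def)
lemma smul_mr: "smul c (x * y) = x * smul c y" using A unfolding is_algebra_def by metis
lemma s0l[simp]: "smul 0 x = 0"
proof -
  have "smul (0+0) x = smul 0 x + smul 0 x" by (rule sadd_l)
  then show ?thesis by simp
qed
lemma s0r[simp]: "smul c 0 = 0"
proof -
  have "smul c (0+0) = smul c 0 + smul c 0" by (rule sadd_r)
  then show ?thesis by simp
qed
lemma sminus_l: "smul (- c) x = - smul c x"
proof -
  have "smul (c + - c) x = smul c x + smul (-c) x" by (rule sadd_l)
  then show ?thesis by (simp add: eq_neg_iff_add_eq_0 add.commute)
qed
lemma sminus_r: "smul c (- x) = - smul c x"
proof -
  have "smul c (x + - x) = smul c x + smul c (-x)" by (rule sadd_r)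
  then show ?thesis by (simp add: eq_neg_iff_add_eq_0 add.commute)
qed
lemma sdiff_l: "smul (c - d) x = smul c x - smul d x"
  using sadd_l[of c "-d" x] by (simp add: sminus_l)
lemma sdiff_r: "smul c (x - y) = smul c x - smul c y"
  using sadd_r[of c x "-y"] by (simp add: sminus_r)
lemma ssum_r: "smul c (sum f S) = (\<Sum>i\<in>S. smul c (f i))"
  by (induction S rule: infinite_finite_induct) (simp_all add: sadd_r)
lemma ssum_l: "smul (sum f S) x = (\<Sum>i\<in>S. smul (f i) x)"
  by (induction S rule: infinite_finite_induct) (simp_all add: sadd_l)
lemma sinv: "c \<noteq> 0 \<Longrightarrow> smul (inverse c) (smul c x) = x"
  by (simp add: smult[symmetric])

lemma isI_sum: "isI smul I \<Longrightarrow> (\<And>i. i \<in> S \<Longrightarrow> f i \<in> I) \<Longrightarrow> sum f S \<in> I"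
  by (induction S rule: infinite_finite_induct) (auto simp: isI_def)
lemma isI_diff: "isI smul I \<Longrightarrow> x \<in> I \<Longrightarrow> y \<in> I \<Longrightarrow> x - y \<in> I"
  unfolding isI_def by (metis diff_conv_add_uminus)
lemma isI_cancel: "isI smul I \<Longrightarrow> c \<noteq> 0 \<Longrightarrow> smul c x \<in> I \<Longrightarrow> x \<in> I"
  unfolding isI_def by (metis sinv)

lemma vander:
  assumes I: "isI smul I"
  shows "(\<And>l. (\<Sum>m\<le>D. smul (l ^ m) (c m)) \<in> I) \<Longrightarrow> m \<le> D \<Longrightarrow> c m \<in> I"
proof (induction D arbitrary: c m)
  case 0
  then show ?case using "0.prems"(1)[of 1] by simp
next
  case (Suc D)
  define c' where "c' m = smul ((2::'k)^m - 2^(Suc D)) (c m)" for m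
  have "(\<Sum>m\<le>D. smul (l ^ m) (c' m)) \<in> I" for l
  proof -
    have e: "(\<Sum>m\<le>Suc D. smul ((2*l) ^ m) (c m)) - smul (2^Suc D) (\<Sum>m\<le>Suc D. smul (l ^ m) (c m))
      = (\<Sum>m\<le>D. smul (l ^ m) (c' m))"
    proof -
      have t: "smul ((2*l) ^ m) (c m) - smul (2^Suc D) (smul (l ^ m) (c m)) = smul (l ^ m) (c' m)" for m
        by (simp add: c'_def smult[symmetric] sdiff_l[symmetric] power_mult_distrib algebra_simps)
      have "(\<Sum>m\<le>Suc D. smul ((2*l) ^ m) (c m)) - smul (2^Suc D) (\<Sum>m\<le>Suc D. smul (l ^ m) (c m))
         = (\<Sum>m\<le>Suc D. smul ((2*l) ^ m) (c m) - smul (2^Suc D) (smul (l ^ m) (c m)))"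
        by (simp only: ssum_r sum_subtractf)
      also have "\<dots> = (\<Sum>m\<le>Suc D. smul (l ^ m) (c' m))" by (simp only: t)
      also have "\<dots> = (\<Sum>m\<le>D. smul (l ^ m) (c' m))" by (simp add: c'_def)
      finally show ?thesis .
    qed
    have "(\<Sum>m\<le>Suc D. smul ((2*l) ^ m) (c m)) - smul (2^Suc D) (\<Sum>m\<le>Suc D. smul (l ^ m) (c m)) \<in> I"
    proof (rule isI_diff[OF I])
      show "(\<Sum>m\<le>Suc D. smul ((2*l) ^ m) (c m)) \<in> I" by (rule Suc.prems(1))
      show "smul (2^Suc D) (\<Sum>m\<le>Suc D. smul (l ^ m) (c m)) \<in> I"
        using Suc.prems(1)[of l] I unfolding isI_def by blast
    qed
    then show ?thesis using e by simp
  qed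
  then have c'I: "c' m \<in> I" if "m \<le> D" for m using Suc.IH that by blast
  have cI: "c m \<in> I" if "m \<le> D" for m
  proof (rule isI_cancel[OF I _ c'I[OF that, unfolded c'_def]])
    have "(2::nat)^m < 2^Suc D" using that by (intro power_strict_increasing) auto
    then have "of_nat (2^m) \<noteq> (of_nat (2^Suc D)::'k)" by (simp only: of_nat_eq_iff)
    then show "(2::'k) ^ m - 2 ^ Suc D \<noteq> 0" by simp
  qed
  show ?case
  proof (cases "m = Suc D")
    case True
    have s1: "(\<Sum>m\<le>Suc D. c m) \<in> I" using Suc.prems(1)[of 1] by simp
    have s2: "(\<Sum>m\<le>D. c m) \<in> I" using cI I by (intro isI_sum) auto
    have "(\<Sum>m\<le>Suc D. c m) - (\<Sum>m\<le>D. c m) \<in> I"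
      using s1 s2 I by (intro isI_diff) auto
    then show ?thesis using True by simp
  next
    case False then show ?thesis using cI Suc.prems(2) by simp
  qed
qed

lemma lin: "\<exists>c. (\<forall>l. pw (x + smul l y) k = (\<Sum>m\<le>Suc k. smul (l ^ m) (c m)))
   \<and> c 0 = pw x k \<and> c 1 = gl x y k \<and> (\<forall>m>Suc k. c m = 0)"
proof (induction k)
  case 0
  show ?case
    by (rule exI[of _ "\<lambda>m. if m = 0 then x else if m = 1 then y else 0"])
       (simp add: pw_def gl_def)
next
  case (Suc k)
  then obtain c where c: "\<And>l. pw (x + smul l y) k = (\<Sum>m\<le>Suc k. smul (l ^ m) (c m))"
    "c 0 = pw x k" "c 1 = gl x y k" "\<And>m. m > Suc k \<Longrightarrow> c m = 0" by blast
  define c' where "c' m = x * c m + (if m = 0 then 0 else y * c (m - 1))" for m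
  have "pw (x + smul l y) (Suc k) = (\<Sum>m\<le>Suc (Suc k). smul (l ^ m) (c' m))" for l
  proof -
    have "pw (x + smul l y) (Suc k) = (x + smul l y) * (\<Sum>m\<le>Suc k. smul (l ^ m) (c m))"
      by (simp add: pw_Suc c(1))
    also have "\<dots> = x * (\<Sum>m\<le>Suc k. smul (l ^ m) (c m)) + smul l (y * (\<Sum>m\<le>Suc k. smul (l ^ m) (c m)))"
      by (simp only: distrib_right smul_ml[symmetric])
    also have "\<dots> = (\<Sum>m\<le>Suc k. smul (l ^ m) (x * c m)) + (\<Sum>m\<le>Suc k. smul (l ^ Suc m) (y * c m))"
      by (simp only: sum_distrib_left ssum_r smul_mr[symmetric] smult[symmetric] power_Suc)
    also have "(\<Sum>m\<le>Suc k. smul (l ^ m) (x * c m)) = (\<Sum>m\<le>Suc (Suc k). smul (l ^ m) (x * c m))"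
      using c(4)[of "Suc (Suc k)"] by simp
    also have "(\<Sum>m\<le>Suc k. smul (l ^ Suc m) (y * c m)) = (\<Sum>m\<le>Suc (Suc k). smul (l ^ m) (if m = 0 then 0 else y * c (m - 1)))"
      by (subst sum.atMost_Suc_shift) simp
    also have "(\<Sum>m\<le>Suc (Suc k). smul (l ^ m) (x * c m)) + \<dots> = (\<Sum>m\<le>Suc (Suc k). smul (l ^ m) (c' m))"
      by (simp add: c'_def sadd_r sum.distrib)
    finally show ?thesis .
  qed
  moreover have "c' 0 = pw x (Suc k)" by (simp add: c'_def c(2) pw_Suc)
  moreover have "c' 1 = gl x y (Suc k)" unfolding c'_def using c(2) c(3) by (simp add: gl_Suc)
  moreover have "\<forall>m>Suc (Suc k). c' m = 0" by (simp add: c'_def c(4))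
  ultimately show ?case by blast
qed

lemma ssum_const: "(\<Sum>j\<le>n. t) = smul (of_nat (Suc n)) t"
proof (induction n)
  case (Suc n)
  have e: "of_nat (Suc (Suc n)) = (of_nat (Suc n) + 1 :: 'k)" by simp
  show ?case using Suc.IH by (simp only: sum.atMost_Suc e sadd_l sone)
qed simp

lemma isI_Lm: "isI smul I \<Longrightarrow> w \<in> I \<Longrightarrow> Lm x i w \<in> I"
  by (induction i) (auto simp: Lm_Suc isI_def)
lemma isI_Rm: "isI smul I \<Longrightarrow> w \<in> I \<Longrightarrow> Rm x i w \<in> I"
  by (induction i) (auto simp: Rm_Suc isI_def)

lemma key:
  assumes I: "isI smul I" and h: "\<And>x. pw x (Suc k0) \<in> I"
  shows "pw x k0 * (z * pw y k0) \<in> I"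
proof -
  define k where "k = Suc k0"
  have gI: "gl x y k \<in> I" for x y
  proof -
    obtain c where c: "\<And>l. pw (x + smul l y) k = (\<Sum>m\<le>Suc k. smul (l ^ m) (c m))" "c 1 = gl x y k"
      using lin by blast
    have "(\<Sum>m\<le>Suc k. smul (l ^ m) (c m)) \<in> I" for l
    proof -
      have "pw (x + smul l y) k \<in> I" using h unfolding k_def by blast
      then show ?thesis by (simp only: c(1))
    qed
    then have "c 1 \<in> I" by (rule vander[OF I, where D="Suc k" and c=c and m=1]) simp
    then show ?thesis using c(2) by simp
  qed
  define T where "T i j = Lm x i (Rm y (k-j) (Rm x (k-i) (Rm y j z)))" for i j
  define t where "t = Lm x k (Rm y k z)"
  have SI: "(\<Sum>j\<le>k. Rm y (k-j) (gl x (Rm y j z) k)) \<in> I"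
    using I gI isI_Rm by (intro isI_sum) auto
  have "(\<Sum>j\<le>k. Rm y (k-j) (gl x (Rm y j z) k)) = (\<Sum>j\<le>k. \<Sum>i\<le>k. T i j)"
    by (simp add: gl_def Rm_sum T_def Lm_Rm)
  also have "\<dots> = (\<Sum>i\<le>k. \<Sum>j\<le>k. T i j)" by (rule sum.swap)
  also have "\<dots> = (\<Sum>i<k. \<Sum>j\<le>k. T i j) + (\<Sum>j\<le>k. T k j)"
    by (simp only: lessThan_Suc_atMost[symmetric] sum.lessThan_Suc)
  also have "(\<Sum>j\<le>k. T k j) = smul (of_nat (Suc k)) t"
  proof -
    have "T k j = t" if "j \<le> k" for j using that by (simp add: T_def t_def Rm_add)
    then have "(\<Sum>j\<le>k. T k j) = (\<Sum>j\<le>k. t)" by simp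
    then show ?thesis by (simp add: ssum_const)
  qed
  finally have eq: "(\<Sum>j\<le>k. Rm y (k-j) (gl x (Rm y j z) k)) = (\<Sum>i<k. \<Sum>j\<le>k. T i j) + smul (of_nat (Suc k)) t" .
  have rest: "(\<Sum>i<k. \<Sum>j\<le>k. T i j) \<in> I"
  proof (rule isI_sum[OF I])
    fix i assume "i \<in> {..<k}"
    then obtain p where p: "k - i = Suc p" by (metis lessThan_iff zero_less_diff Suc_pred)
    have "T i j = Lm x i (z * Lm y j (Rm y (k-j) (pw x p)))" for j
      by (simp add: T_def p Rm_pw Rm_mult_L Rm_mult Lm_Rm)
    then have "(\<Sum>j\<le>k. T i j) = Lm x i (z * gl y (pw x p) k)"
      by (simp add: gl_def Lm_sum sum_distrib_left)
    moreover have "Lm x i (z * gl y (pw x p) k) \<in> I"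
    proof (rule isI_Lm[OF I])
      show "z * gl y (pw x p) k \<in> I" using gI[of y "pw x p"] I unfolding isI_def by blast
    qed
    ultimately show "(\<Sum>j\<le>k. T i j) \<in> I" by simp
  qed
  have "smul (of_nat (Suc k)) t \<in> I"
  proof -
    have "(\<Sum>j\<le>k. Rm y (k-j) (gl x (Rm y j z) k)) - (\<Sum>i<k. \<Sum>j\<le>k. T i j) \<in> I"
      by (rule isI_diff[OF I SI rest])
    then show ?thesis by (simp only: eq add_diff_cancel_left')
  qed
  then have "t \<in> I" by (rule isI_cancel[OF I, rotated]) (rule of_nat_neq_0)
  then show ?thesis by (simp add: t_def k_def Lm_pw Rm_pw)
qed


lemma isI_mem:
  assumes "isI smul I"
  shows "0 \<in> I" "x \<in> I \<Longrightarrow> y \<in> I \<Longrightarrow> x + y \<in> I" "x \<in> I \<Longrightarrow> - x \<in> I"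
    "x \<in> I \<Longrightarrow> a * x \<in> I" "x \<in> I \<Longrightarrow> x * a \<in> I" "x \<in> I \<Longrightarrow> smul c x \<in> I"
  using assms unfolding isI_def by simp_all

lemma isI_I:
  assumes "0 \<in> K" "\<And>a b. a \<in> K \<Longrightarrow> b \<in> K \<Longrightarrow> a + b \<in> K" "\<And>a. a \<in> K \<Longrightarrow> - a \<in> K"
    "\<And>a b. a \<in> K \<Longrightarrow> b * a \<in> K" "\<And>a b. a \<in> K \<Longrightarrow> a * b \<in> K" "\<And>a c. a \<in> K \<Longrightarrow> smul c a \<in> K"
  shows "isI smul K"
  unfolding isI_def by (intro conjI ballI allI) (simp_all add: assms)

lemma NH: "isI smul I \<Longrightarrow> (\<forall>x. pw x k \<in> I) \<Longrightarrow> \<exists>m>0. \<forall>xs. length xs = m \<longrightarrow> nprod xs \<in> I"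
proof (induction k arbitrary: I)
  case 0
  show ?case
  proof (intro exI[of _ 1] conjI allI impI)
    fix xs :: "'a list" assume "length xs = 1"
    then obtain a where "xs = [a]" by (cases xs) auto
    then show "nprod xs \<in> I" using 0 by (simp add: pw_def)
  qed simp
next
  case (Suc k)
  note I = Suc.prems(1)
  have Key: "pw x k * (v * pw y k) \<in> I" for x v y using key[OF I] Suc.prems(2) by blast
  define J where "J = \<Inter>{K. isI smul K \<and> I \<subseteq> K \<and> (\<forall>x. pw x k \<in> K)}"
  have Jmin: "J \<subseteq> K" if "isI smul K" "I \<subseteq> K" "\<forall>x. pw x k \<in> K" for K
    using that unfolding J_def by blast
  have JI: "isI smul J" unfolding J_def isI_def by blast
  have IJ: "I \<subseteq> J" unfolding J_def by blast
  have pwJ: "\<forall>x. pw x k \<in> J" unfolding J_def by blast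
  obtain m where m: "m > 0" "\<And>xs. length xs = m \<Longrightarrow> nprod xs \<in> J"
    using Suc.IH[OF JI pwJ] by blast
  have K2: "J \<subseteq> {w. \<forall>v. pw x k * v * w \<in> I}" for x
  proof (rule Jmin)
    show "isI smul {w. \<forall>v. pw x k * v * w \<in> I}"
    proof (rule isI_I; unfold mem_Collect_eq)
      show "\<forall>v. pw x k * v * 0 \<in> I" using isI_mem(1)[OF I] by simp
      show "\<forall>v. pw x k * v * (a + b) \<in> I" if "\<forall>v. pw x k * v * a \<in> I" "\<forall>v. pw x k * v * b \<in> I" for a b
        using that isI_mem(2)[OF I] by (simp add: distrib_left)
      show "\<forall>v. pw x k * v * (- a) \<in> I" if "\<forall>v. pw x k * v * a \<in> I" for a
        using that isI_mem(3)[OF I] by simp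
      show "\<forall>v. pw x k * v * (b * a) \<in> I" if "\<forall>v. pw x k * v * a \<in> I" for a b
        using that by (metis mult.assoc)
      show "\<forall>v. pw x k * v * (a * b) \<in> I" if "\<forall>v. pw x k * v * a \<in> I" for a b
        using that isI_mem(5)[OF I] by (metis mult.assoc)
      show "\<forall>v. pw x k * v * smul c a \<in> I" if "\<forall>v. pw x k * v * a \<in> I" for a c
        using that isI_mem(6)[OF I] by (metis smul_mr)
    qed
    show "I \<subseteq> {w. \<forall>v. pw x k * v * w \<in> I}" using isI_mem(4)[OF I] by blast
    show "\<forall>y. pw y k \<in> {w. \<forall>v. pw x k * v * w \<in> I}" using Key by (simp add: mult.assoc)
  qed
  have K1: "J \<subseteq> {u. \<forall>v. \<forall>w\<in>J. u * v * w \<in> I}"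
  proof (rule Jmin)
    show "isI smul {u. \<forall>v. \<forall>w\<in>J. u * v * w \<in> I}"
    proof (rule isI_I; unfold mem_Collect_eq)
      show "\<forall>v. \<forall>w\<in>J. 0 * v * w \<in> I" using isI_mem(1)[OF I] by simp
      show "\<forall>v. \<forall>w\<in>J. (a + b) * v * w \<in> I" if "\<forall>v. \<forall>w\<in>J. a * v * w \<in> I" "\<forall>v. \<forall>w\<in>J. b * v * w \<in> I" for a b
        using that isI_mem(2)[OF I] by (simp add: distrib_right)
      show "\<forall>v. \<forall>w\<in>J. (- a) * v * w \<in> I" if "\<forall>v. \<forall>w\<in>J. a * v * w \<in> I" for a
        using that isI_mem(3)[OF I] by simp
      show "\<forall>v. \<forall>w\<in>J. (b * a) * v * w \<in> I" if "\<forall>v. \<forall>w\<in>J. a * v * w \<in> I" for a b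
        using that isI_mem(4)[OF I] by (metis mult.assoc)
      show "\<forall>v. \<forall>w\<in>J. (a * b) * v * w \<in> I" if "\<forall>v. \<forall>w\<in>J. a * v * w \<in> I" for a b
        using that by (metis mult.assoc)
      show "\<forall>v. \<forall>w\<in>J. smul c a * v * w \<in> I" if "\<forall>v. \<forall>w\<in>J. a * v * w \<in> I" for a c
        using that isI_mem(6)[OF I] by (metis smul_ml)
    qed
    show "I \<subseteq> {u. \<forall>v. \<forall>w\<in>J. u * v * w \<in> I}" using isI_mem(5)[OF I] by blast
    show "\<forall>x. pw x k \<in> {u. \<forall>v. \<forall>w\<in>J. u * v * w \<in> I}" using K2 by blast
  qed
  show ?case
  proof (intro exI[of _ "2 * m + 1"] conjI allI impI)
    fix xs :: "'a list" assume len: "length xs = 2 * m + 1"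
    define as where "as = take m xs"
    define b where "b = xs ! m"
    define cs where "cs = drop (Suc m) xs"
    have ml: "m < length xs" using len by simp
    have xs: "xs = as @ [b] @ cs" unfolding as_def b_def cs_def
      using Cons_nth_drop_Suc[OF ml] append_take_drop_id[of m xs] by simp
    have la: "length as = m" and lc: "length cs = m" using len by (auto simp: as_def cs_def)
    have ne: "as \<noteq> []" "cs \<noteq> []" using la lc m(1) by auto
    have "nprod xs = nprod as * b * nprod cs"
      using ne by (cases cs) (simp_all add: xs nprod_append mult.assoc)
    moreover have "nprod as \<in> J" "nprod cs \<in> J" using m(2) la lc by auto
    ultimately show "nprod xs \<in> I" using K1 by auto
  qed simp
qed

end


definition e0 :: "nat list \<Rightarrow> 'k::comm_semiring_1" where
  "e0 w = (if w = [0] then 1 else 0)"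

lemma pmul_e0: "pmul e0 f w = (case w of [] \<Rightarrow> 0 | a # w' \<Rightarrow> if a = 0 then f w' else 0)"
proof (cases w)
  case Nil
  then show ?thesis by (simp add: pmul_def e0_def)
next
  case (Cons a w')
  have "pmul e0 f w = e0 (take 0 w) * f (drop 0 w) + (\<Sum>i\<le>length w'. e0 (take (Suc i) w) * f (drop (Suc i) w))"
    unfolding pmul_def Cons length_Cons by (rule sum.atMost_Suc_shift)
  also have "\<dots> = (\<Sum>i\<le>length w'. if i = 0 then (if a = 0 then f w' else 0) else 0)"
  proof -
    have "e0 (take (Suc i) w) * f (drop (Suc i) w) = (if i = 0 then (if a = 0 then f w' else 0) else 0)"
      if "i \<le> length w'" for i
      using that by (cases w') (auto simp: e0_def Cons)
    then show ?thesis by (simp add: e0_def Cons)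
  qed
  also have "\<dots> = (if a = 0 then f w' else 0)" by simp
  finally show ?thesis by (simp add: Cons)
qed

lemma ppow_e0: "ppow (e0::nat list \<Rightarrow> 'k::comm_semiring_1) k = (\<lambda>w. if w = replicate (Suc k) 0 then 1 else 0)"
proof (induction k)
  case 0
  show ?case by (auto simp: e0_def)
next
  case (Suc k)
  show ?case
  proof
    fix w show "ppow (e0::nat list \<Rightarrow> 'k) (Suc k) w = (if w = replicate (Suc (Suc k)) 0 then 1 else 0)"
    proof -
      have ih: "ppow (e0::nat list \<Rightarrow> 'k) k w' = (if w' = replicate (Suc k) 0 then 1 else 0)" for w'
        by (simp only: Suc.IH)
      show ?thesis by (cases w) (auto simp: pmul_e0 ih)
    qed
  qed
qed

lemma all0: "(\<forall>x\<in>set w. x = (0::nat)) \<Longrightarrow> w = replicate (length w) 0"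
  by (induction w) auto

lemma count_rep: "count_list (replicate n (0::nat)) i = (if i = 0 then n else 0)"
  by (induction n) auto

lemma words: "(\<forall>i. count_list (w::nat list) i = (if i = 0 then Suc k else 0)) \<longleftrightarrow> w = replicate (Suc k) 0"
proof
  assume h: "\<forall>i. count_list w i = (if i = 0 then Suc k else 0)"
  have "\<forall>x\<in>set w. x = 0"
  proof
    fix x assume "x \<in> set w"
    then have "count_list w x \<noteq> 0" by (simp add: count_list_0_iff)
    then show "x = 0" using h by (metis)
  qed
  then have w: "w = replicate (length w) 0" using all0 by blast
  then have "count_list w 0 = length w" by (metis count_rep)
  then show "w = replicate (Suc k) 0" using h w by simp
qed (simp add: count_rep)

lemma FX_padd: "(f::nat list \<Rightarrow> 'k::monoid_add) \<in> FX \<Longrightarrow> g \<in> FX \<Longrightarrow> padd f g \<in> FX"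
proof -
  assume f: "f \<in> FX" and g: "g \<in> FX"
  have "{w. padd f g w \<noteq> 0} \<subseteq> {w. f w \<noteq> 0} \<union> {w. g w \<noteq> 0}" by (auto simp: padd_def)
  then show ?thesis using f g unfolding FX_def by (auto intro: finite_subset simp: padd_def)
qed

lemma zero_FX: "(\<lambda>_. 0) \<in> FX" by (simp add: FX_def)

lemma ppow_e0_FX: "ppow e0 k \<in> FX"
proof -
  have "{w. ppow e0 k w \<noteq> (0::'k::comm_semiring_1)} \<subseteq> {replicate (Suc k) 0}" by (simp add: ppow_e0)
  then show ?thesis unfolding FX_def by (auto intro: finite_subset simp: ppow_e0)
qed

lemma nprod_zero: "(0::'a::ring) \<in> set xs \<Longrightarrow> nprod xs = 0"
  by (induction xs rule: nprod.induct) auto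

lemma nprod_rep: "nprod (replicate (Suc n) x) = pw x n"
  by (induction n) (simp_all add: pw_def pw_Suc[unfolded pw_def])



lemma pw_smul: "alg smul \<Longrightarrow> pw (smul l a) n = smul (l ^ Suc n) (pw a n)"
proof (induction n)
  case 0
  then show ?case by (simp add: pw_def)
next
  case (Suc n)
  interpret alg smul by (rule Suc.prems)
  show ?case using Suc
    by (simp add: pw_Suc smul_ml[symmetric] smul_mr[symmetric] smult[symmetric] mult.commute)
qed

lemma ident_coeff:
  fixes smul :: "'k::field_char_0 \<Rightarrow> 'a::ring \<Rightarrow> 'a" and a :: 'a
  assumes alg: "alg smul" and g: "g \<in> Id_alg smul" and gr: "g (replicate (Suc k) 0) \<noteq> 0"
  shows "pw a k = 0"
proof -
  interpret alg smul by (rule alg)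
  define S where "S = {w. g w \<noteq> 0}"
  have gFX: "g \<in> FX" and gid: "\<And>\<phi>. peval smul \<phi> g = 0" using g by (auto simp: Id_alg_def)
  have fS: "finite S" and nilS: "[] \<notin> S" using gFX by (auto simp: FX_def S_def)
  define rp where "rp m = replicate m (0::nat)" for m
  have inj: "inj rp" unfolding rp_def by (metis injI length_replicate)
  define M where "M = rp -` S"
  have fM: "finite M" unfolding M_def using fS inj by (intro finite_vimageI) auto
  then obtain D where D: "M \<subseteq> {..D}" by (metis finite_nat_set_iff_bounded_le atMost_iff subsetI)
  define c where "c m = smul (g (rp m)) (pw a (m - 1))" for m
  have "(\<Sum>m\<le>D. smul (l ^ m) (c m)) \<in> {0}" for l
  proof -
    define \<phi> where "\<phi> i = (if i = (0::nat) then smul l a else 0)" for i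
    define T where "T w = smul (g w) (nprod (map \<phi> w))" for w
    have "0 = peval smul \<phi> g" using gid by simp
    also have "\<dots> = sum T S" by (simp add: peval_def T_def S_def)
    also have "\<dots> = sum T (rp ` M)"
    proof (rule sum.mono_neutral_right[OF fS])
      show "rp ` M \<subseteq> S" by (auto simp: M_def)
      show "\<forall>w\<in>S - rp ` M. T w = 0"
      proof
        fix w assume w: "w \<in> S - rp ` M"
        then have "\<not> (\<forall>x\<in>set w. x = 0)" using all0[of w] by (auto simp: M_def rp_def)
        then obtain x where "x \<in> set w" "x \<noteq> 0" by blast
        then have "0 \<in> set (map \<phi> w)" by (force simp: \<phi>_def)
        then show "T w = 0" by (simp add: T_def nprod_zero)
      qed
    qed
    also have "\<dots> = sum (T \<circ> rp) M" by (rule sum.reindex) (rule inj_on_subset[OF inj], simp)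
    also have "\<dots> = (\<Sum>m\<in>M. smul (l ^ m) (c m))"
    proof (rule sum.cong[OF refl])
      fix m assume "m \<in> M"
      then have "m \<noteq> 0" using nilS by (cases m) (auto simp: M_def rp_def)
      then obtain n where n: "m = Suc n" by (cases m) auto
      have me: "map \<phi> (rp m) = replicate (Suc n) (smul l a)" by (simp add: rp_def n \<phi>_def)
      have e: "nprod (map \<phi> (rp m)) = smul (l ^ m) (pw a n)"
        by (simp only: me nprod_rep pw_smul[OF alg]) (simp add: n)
      show "(T \<circ> rp) m = smul (l ^ m) (c m)"
        by (simp only: comp_def T_def c_def e smult[symmetric] mult.commute) (simp add: n)
    qed
    also have "\<dots> = (\<Sum>m\<le>D. smul (l ^ m) (c m))"
    proof (rule sum.mono_neutral_left)
      show "\<forall>m\<in>{..D} - M. smul (l ^ m) (c m) = 0" by (auto simp: M_def S_def c_def)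
    qed (use D in auto)
    finally show ?thesis by simp
  qed
  moreover have "isI smul {0}" by (simp add: isI_def)
  moreover have "Suc k \<le> D"
  proof -
    have "Suc k \<in> M" using gr by (simp add: M_def S_def rp_def)
    then show ?thesis using D by auto
  qed
  ultimately have "c (Suc k) \<in> {0}" using vander by blast
  then have "smul (g (rp (Suc k))) (pw a k) = 0" by (simp add: c_def)
  then show ?thesis using gr sinv[of "g (rp (Suc k))" "pw a k"] by (simp add: rp_def)
qed



lemma main_ident:
  fixes N :: "(nat list \<Rightarrow> 'k::{real_normed_field,banach}) \<Rightarrow> real"
    and smul :: "'k \<Rightarrow> 'a::ring \<Rightarrow> 'a"
  assumes MN: "MN_norm N" and alg0: "is_algebra smul" and cn: "completion_nil N (Id_alg smul)"
  shows "\<exists>k. \<forall>a::'a. pw a k = 0"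
proof -
  define I where "I = Id_alg smul"
  have al: "alg smul" by unfold_locales (rule alg0)
  have zI: "(\<lambda>_. 0) \<in> I" by (simp add: I_def Id_alg_def zero_FX peval_def)
  have IFX: "I \<subseteq> FX" by (auto simp: I_def Id_alg_def)
  have Nnn: "\<And>f. f \<in> FX \<Longrightarrow> N f \<ge> 0" and N0: "\<And>f. f \<in> FX \<Longrightarrow> N f = 0 \<longleftrightarrow> f = (\<lambda>_. 0)"
    and Nsc: "\<And>f c. f \<in> FX \<Longrightarrow> N (pscale c f) = norm c * N f"
    and Nmh: "\<And>f d. f \<in> FX \<Longrightarrow> N (mhcomp d f) \<le> N f"
    using MN unfolding MN_norm_def by blast+
  have bdd: "bdd_below ((\<lambda>g. N (padd f g)) ` I)" if "f \<in> FX" for f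
  proof (rule bdd_belowI2[of _ 0])
    fix g assume "g \<in> I"
    then show "0 \<le> N (padd f g)" using that IFX by (intro Nnn FX_padd) auto
  qed
  have pz: "padd (\<lambda>_. 0) (\<lambda>_. 0) = (\<lambda>_. (0::'k))" by (simp add: padd_def)
  have q0: "qnorm N I (\<lambda>_. 0) \<le> 0"
  proof -
    have "qnorm N I (\<lambda>_. 0) \<le> N (padd (\<lambda>_. 0) (\<lambda>_. 0))"
      unfolding qnorm_def by (rule cINF_lower[OF bdd[OF zero_FX] zI])
    also have "\<dots> = 0" using N0[OF zero_FX] by (simp add: pz)
    finally show ?thesis .
  qed
  have e0FX: "(e0 :: nat list \<Rightarrow> 'k) \<in> FX" using ppow_e0_FX[of 0] by simp
  have ps: "psub (e0 :: nat list \<Rightarrow> 'k) e0 = (\<lambda>_. 0)" by (simp add: psub_def)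
  have "\<exists>k. (\<lambda>n. qnorm N I (ppow (e0 :: nat list \<Rightarrow> 'k) k)) \<longlonglongrightarrow> 0"
    using cn[unfolded completion_nil_def I_def[symmetric], rule_format, of "\<lambda>n. e0"]
    using e0FX q0 by (simp add: ps)
  then obtain k where "(\<lambda>n. qnorm N I (ppow (e0 :: nat list \<Rightarrow> 'k) k)) \<longlonglongrightarrow> 0" by blast
  then have qP: "qnorm N I (ppow (e0 :: nat list \<Rightarrow> 'k) k) = 0" by (simp add: LIMSEQ_const_iff)
  define P where "P = ppow (e0 :: nat list \<Rightarrow> 'k) k"
  define r where "r = replicate (Suc k) (0::nat)"
  have PFX: "P \<in> FX" by (simp add: P_def ppow_e0_FX)
  have Pr: "P r = 1" by (simp add: P_def r_def ppow_e0)
  have NP: "N P > 0"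
  proof -
    have "P \<noteq> (\<lambda>_. 0)" using Pr by (metis zero_neq_one)
    then show ?thesis using Nnn[OF PFX] N0[OF PFX] by linarith
  qed
  have "(INF g\<in>I. N (padd P g)) < N P / 2" using qP NP by (simp add: qnorm_def P_def)
  then obtain g where gI: "g \<in> I" and gN: "N (padd P g) < N P / 2"
    using cINF_less_iff[OF _ bdd[OF PFX]] zI by blast
  define d where "d i = (if i = 0 then Suc k else 0)" for i :: nat
  have mh: "mhcomp d (padd P g) = pscale (1 + g r) P"
  proof
    fix w show "mhcomp d (padd P g) w = pscale (1 + g r) P w"
      using words[of w k] by (auto simp: mhcomp_def d_def pscale_def padd_def P_def ppow_e0 r_def)
  qed
  have "norm (1 + g r) * N P \<le> N (padd P g)"
    using Nmh[OF FX_padd[OF PFX], of g d] gI IFX by (auto simp: mh Nsc[OF PFX])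
  then have "norm (1 + g r) * N P < 1/2 * N P" using gN by simp
  then have "norm (1 + g r) < 1/2" using NP by simp
  then have gr: "g r \<noteq> 0" by auto
  have "pw a k = 0" for a :: 'a
    using ident_coeff[OF al gI[unfolded I_def] gr[unfolded r_def]] .
  then show ?thesis by blast
qed

theorem corollary1p6:
  fixes N :: "(nat list \<Rightarrow> 'k::{real_normed_field,banach}) \<Rightarrow> real"
    and smul :: "'k \<Rightarrow> 'a::ring \<Rightarrow> 'a"
  assumes "MN_norm N"
    and "is_algebra smul"
    and "is_PI smul"
    and "completion_nil N (Id_alg smul)"
  shows "nilpotent_alg TYPE('a)"
proof -
  obtain k where k: "\<forall>a::'a. pw a k = 0" using main_ident[OF assms(1,2,4)] by blast
  interpret alg smul by unfold_locales (rule assms(2))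
  have "isI smul {0}" by (simp add: isI_def)
  then obtain m where "m > 0" "\<forall>xs::'a list. length xs = m \<longrightarrow> nprod xs \<in> {0}"
    using NH[of "{0}" k] k by auto
  then show ?thesis unfolding nilpotent_alg_def by auto
qed

end
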